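(* For $(x,a)\in\mathbb{R}\times\mathbb{R}_+$ define the operator $\widehat R_{\mathrm{Aff}}(x,a)$ on $\mathcal{S}(\mathbb{R}_+)$ by \[\widehat R_{\mathrm{Aff}}(x,a)\psi(r):=\frac{e^{2\pi i x v}\,v\,(1-e^{v})}{1+v-e^{v}}\,\psi\big(re^{-v}\big),\qquad v:=\lambda^{-1}\!\Big(\frac ra\Big),\ r>0\] (with the prefactor interpreted as its limit $2$ when $v=0$). Then for all $\psi,\phi\in\mathcal{S}(\mathbb{R}_+)$ and $(x,a)\in\mathbb{R}\times\mathbb{R}_+$, \[W_{\mathrm{Aff}}^{\psi,\phi}(x,a)=\big\langle\widehat R_{\mathrm{Aff}}(x,a)\psi,\phi\big\rangle_{L^2(\mathbb{R}_+)}.\]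
   Context: $L^2(\mathbb{R}_+)$ denotes $L^2(\mathbb{R}_+, a^{-1}\,da)$ with inner product $\langle\psi,\phi\rangle=\int_0^\infty\psi\overline\phi\,\frac{da}{a}$. $\mathcal{S}(\mathbb{R}_+)$ is the space of smooth $\psi:\mathbb{R}_+\to\mathbb{C}$ with $x\mapsto\psi(e^x)$ in $\mathcal{S}(\mathbb{R})$. $\lambda(u) := \frac{ue^u}{e^u-1}$ for $u\neq 0$, $\lambda(0):=1$; $\lambda$ is an increasing bijection $\mathbb{R}\to(0,\infty)$ with inverse $\lambda^{-1}$. Affine cross-Wigner transform: $W_{\mathrm{Aff}}^{\psi,\phi}(x,a) := \int_{-\infty}^{\infty}\psi(a\lambda(u))\overline{\phi(a\lambda(-u))}e^{-2\pi i x u}\,du$. *)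

theory Defs
  imports "HOL-Analysis.Analysis"
begin

primrec iter_deriv :: "nat \<Rightarrow> (real \<Rightarrow> complex) \<Rightarrow> real \<Rightarrow> complex" where
  "iter_deriv 0 f = f"
| "iter_deriv (Suc n) f = (\<lambda>x. vector_derivative (iter_deriv n f) (at x))"

definition schwartz :: "(real \<Rightarrow> complex) \<Rightarrow> bool" where
  "schwartz f \<longleftrightarrow>
     (\<forall>n x. (iter_deriv n f has_vector_derivative iter_deriv (Suc n) f x) (at x)) \<and>
     (\<forall>m n. bounded (range (\<lambda>x. complex_of_real (x ^ m) * iter_deriv n f x)))"

definition schwartz_pos :: "(real \<Rightarrow> complex) \<Rightarrow> bool" where
  "schwartz_pos \<psi> \<longleftrightarrow> schwartz (\<lambda>x. \<psi> (exp x))"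

definition lam :: "real \<Rightarrow> real" where
  "lam u = (if u = 0 then 1 else u * exp u / (exp u - 1))"

definition lam_inv :: "real \<Rightarrow> real" where
  "lam_inv r = (THE u. lam u = r)"

text \<open>Inner product of L^2(R_+, da/a).\<close>
definition inner_Rp :: "(real \<Rightarrow> complex) \<Rightarrow> (real \<Rightarrow> complex) \<Rightarrow> complex" where
  "inner_Rp f g = (LINT a:{0<..}|lborel. f a * cnj (g a) / complex_of_real a)"

definition W_Aff :: "(real \<Rightarrow> complex) \<Rightarrow> (real \<Rightarrow> complex) \<Rightarrow> real \<Rightarrow> real \<Rightarrow> complex" where
  "W_Aff \<psi> \<phi> x a = (LINT u|lborel. \<psi> (a * lam u) * cnj (\<phi> (a * lam (- u)))
                          * exp (- 2 * complex_of_real pi * \<i> * complex_of_real (x * u)))"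

definition R_pref :: "real \<Rightarrow> real" where
  "R_pref v = (if v = 0 then 2 else v * (1 - exp v) / (1 + v - exp v))"

definition R_Aff :: "real \<Rightarrow> real \<Rightarrow> (real \<Rightarrow> complex) \<Rightarrow> real \<Rightarrow> complex" where
  "R_Aff x a \<psi> r = (let v = lam_inv (r / a) in
      exp (2 * complex_of_real pi * \<i> * complex_of_real (x * v)) * complex_of_real (R_pref v)
      * \<psi> (r * exp (- v)))"

end

theory Submission
  imports Defs
begin

lemma exp_strict: "u \<noteq> 0 \<Longrightarrow> 1 + u < exp (u::real)"
  using exp_minus_greater[of "-u"] by simp

lemma lam_nz: "u \<noteq> 0 \<Longrightarrow> lam u = u * exp u / (exp u - 1)"
  by (simp add: lam_def)

lemma em1_nz: "u \<noteq> 0 \<Longrightarrow> exp u - 1 \<noteq> (0::real)"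
  by simp

lemma lam_pos: "lam u > 0"
proof (cases "u = 0")
  case True then show ?thesis by (simp add: lam_def)
next
  case False
  show ?thesis
  proof (cases "u > 0")
    case True then show ?thesis by (simp add: lam_def)
  next
    case False
    with \<open>u \<noteq> 0\<close> have "u < 0" by simp
    then have "exp u < 1" by simp
    then show ?thesis using \<open>u < 0\<close> by (simp add: lam_def divide_pos_neg mult_neg_pos field_simps)
  qed
qed

lemma lam_refl: "lam u = exp u * lam (- u)"
proof (cases "u = 0")
  case True then show ?thesis by (simp add: lam_def)
next
  case False
  have "exp u - 1 \<noteq> 0" "exp (-u) - 1 \<noteq> 0" using False by auto
  then show ?thesis using False
    by (simp add: lam_def exp_minus field_simps)
qed

definition lamd :: "real \<Rightarrow> real" where
  "lamd u = exp u * (exp u - 1 - u) / (exp u - 1)^2"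

lemma lam_deriv: assumes "u \<noteq> 0" shows "(lam has_real_derivative lamd u) (at u)"
proof -
  have nz: "exp u - 1 \<noteq> 0" using assms by simp
  have "((\<lambda>u. u * exp u / (exp u - 1)) has_real_derivative lamd u) (at u)"
    by (rule DERIV_cong[OF DERIV_divide[OF DERIV_mult[OF DERIV_ident DERIV_exp] DERIV_diff[OF DERIV_exp DERIV_const] nz]])
       (simp add: lamd_def algebra_simps power2_eq_square)
  then show ?thesis
    by (rule has_field_derivative_transform_within_open[where S="-{0}"]) (use assms in \<open>auto simp: lam_def\<close>)
qed

lemma lamd_pos: "u \<noteq> 0 \<Longrightarrow> lamd u > 0"
  using exp_strict[of u] by (auto simp: lamd_def intro!: divide_pos_pos mult_pos_pos)

lemma lam_cont: "u \<noteq> 0 \<Longrightarrow> isCont lam u"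
  using lam_deriv DERIV_isCont by blast

lemma lam_cont_on: "0 \<notin> S \<Longrightarrow> continuous_on S lam"
  by (metis continuous_at_imp_continuous_on lam_cont)

lemma lam_key: "u \<noteq> 0 \<Longrightarrow> exp u - 1 < u * exp (u::real)"
proof -
  assume "u \<noteq> 0"
  then have "1 - u < exp (-u)" using exp_minus_greater by simp
  then have "exp u * (1 - u) < exp u * exp (-u)" by simp
  then show ?thesis by (simp add: exp_minus field_simps)
qed

lemma lam_gt1: "u > 0 \<Longrightarrow> lam u > 1"
  using lam_key[of u] by (simp add: lam_def)

lemma lam_lt1: "u < 0 \<Longrightarrow> lam u < 1"
proof -
  assume u: "u < 0"
  then have "exp u < 1" by simp
  then show ?thesis using lam_key[of u] u by (simp add: lam_def field_simps)
qed

lemma lam_less: assumes "u < w" shows "lam u < lam w"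
proof -
  have inc: "lam u < lam w" if "u < w" "0 \<notin> {u..w}" for u w
  proof (rule DERIV_pos_imp_increasing[OF that(1)])
    fix x assume "u \<le> x" "x \<le> w"
    then have "x \<noteq> 0" using that(2) by auto
    then show "\<exists>y. DERIV lam x :> y \<and> y > 0" using lam_deriv lamd_pos by blast
  qed
  consider "w < 0" | "w = 0" | "u < 0" "0 < w" | "u = 0" | "0 < u" using assms by linarith
  then show ?thesis
  proof cases
    case 1 then show ?thesis using inc[OF assms] assms by auto
  next
    case 2 then show ?thesis using lam_lt1[of u] assms by (simp add: lam_def)
  next
    case 3 then show ?thesis using lam_lt1[of u] lam_gt1[of w] by simp
  next
    case 4 then show ?thesis using lam_gt1[of w] assms by (simp add: lam_def)
  next
    case 5 then show ?thesis using inc[OF assms] assms by auto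
  qed
qed

lemma lam_inj: "inj lam"
proof (rule injI)
  fix x y assume "lam x = lam y"
  then show "x = y" using lam_less[of x y] lam_less[of y x] by (cases x y rule: linorder_cases) auto
qed

lemma lam_inv_lam [simp]: "lam_inv (lam v) = v"
  unfolding lam_inv_def using lam_inj by (auto intro!: the_equality dest: injD)

lemma lam_neg: "t > 0 \<Longrightarrow> lam (- t) = t / (exp t - 1)"
  using lam_refl[of t] by (simp add: lam_def field_simps)

lemma lam_surj: assumes r: "r > 0" shows "\<exists>u. lam u = r"
proof -
  consider "r = 1" | "r > 1" | "r < 1" by linarith
  then show ?thesis
  proof cases
    case 1 then show ?thesis by (auto simp: lam_def)
  next
    case 2
    have c: "continuous_on {r - 1..r} lam" by (rule lam_cont_on) (use 2 in auto)
    have e1: "exp (r - 1) - 1 > 0" using 2 by simp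
    have "1 + (r - 1) \<le> exp (r - 1)" by (rule exp_ge_add_one_self)
    then have "(r - 1) * exp (r - 1) \<le> r * (exp (r - 1) - 1)" by (simp add: algebra_simps)
    then have a1: "lam (r - 1) \<le> r" using 2 e1 by (simp add: lam_def pos_divide_le_eq)
    have e2: "exp r - 1 > 0" using 2 by simp
    have a2: "r \<le> lam r" using 2 e2 by (simp add: lam_def pos_le_divide_eq)
    show ?thesis using IVT'[OF a1 a2 _ c] by auto
  next
    case 3
    define t1 where "t1 = 1 - r"
    define t2 where "t2 = 2 / r"
    have t1: "t1 > 0" "t1 < t2" using 3 r
      by (auto simp: t1_def t2_def field_simps) (smt (verit) zero_le_square)
    have c: "continuous_on {-t2..-t1} lam" by (rule lam_cont_on) (use t1 in auto)
    have q: "1 + t2 + t2^2/2 \<le> exp t2" by (rule exp_lower_Taylor_quadratic) (use t1 in auto)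
    have "t2 / (exp t2 - 1) \<le> r"
    proof -
      have "t2 \<le> r * (t2 + t2^2/2)" using r by (simp add: t2_def field_simps power2_eq_square)
      also have "\<dots> \<le> r * (exp t2 - 1)" using q r by (intro mult_left_mono) auto
      finally show ?thesis using t1 by (simp add: pos_divide_le_eq)
    qed
    then have a1: "lam (- t2) \<le> r" using t1 lam_neg[of t2] by simp
    have k: "exp t1 - 1 < t1 * exp t1" using lam_key[of t1] t1 by simp
    have "1 - t1 \<le> exp (- t1)" by (rule exp_minus_ge)
    also have "exp (- t1) \<le> t1 / (exp t1 - 1)"
      using k t1 by (simp add: exp_minus pos_le_divide_eq field_simps)
    finally have a2: "r \<le> lam (- t1)" using lam_neg[of t1] t1 by (simp add: t1_def)
    show ?thesis using IVT'[OF a1 a2 _ c] t1 by auto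
  qed
qed

lemma lam_lam_inv: "r > 0 \<Longrightarrow> lam (lam_inv r) = r"
  using lam_surj lam_inv_lam by metis

lemma lam_image: "lam ` (- {0}) = {0<..} - {1}"
proof
  show "lam ` (- {0}) \<subseteq> {0<..} - {1}"
  proof
    fix r assume "r \<in> lam ` (- {0})"
    then obtain u where u: "u \<noteq> 0" "r = lam u" by auto
    have l0: "lam 0 = 1" by (simp add: lam_def)
    have "lam u \<noteq> lam 0" using u lam_inj by (auto dest: injD)
    then show "r \<in> {0<..} - {1}" using u lam_pos l0 by auto
  qed
  show "{0<..} - {1} \<subseteq> lam ` (- {0})"
  proof
    fix r :: real assume "r \<in> {0<..} - {1}"
    then have r: "r > 0" "r \<noteq> 1" by auto
    then have "lam_inv r \<noteq> 0" using lam_lam_inv[of r] by (auto simp: lam_def)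
    then show "r \<in> lam ` (- {0})" using lam_lam_inv[OF r(1)] by (metis ComplI image_eqI singletonD)
  qed
qed

lemma lam_inv_cont: assumes "r > 0" "r \<noteq> 1" shows "isCont lam_inv r"
proof -
  define u where "u = lam_inv r"
  have ru: "r = lam u" using lam_lam_inv assms by (simp add: u_def)
  have u0: "u \<noteq> 0" using ru assms by (auto simp: lam_def)
  have "isCont lam_inv (lam u)"
  proof (rule isCont_inverse_function[where d="\<bar>u\<bar>/2" and f=lam and g=lam_inv and x=u])
    show "0 < \<bar>u\<bar> / 2" using u0 by simp
    fix z assume "\<bar>z - u\<bar> \<le> \<bar>u\<bar> / 2"
    show "lam_inv (lam z) = z" by simp
  next
    fix z assume "\<bar>z - u\<bar> \<le> \<bar>u\<bar> / 2"
    then have "z \<noteq> 0" using u0 by auto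
    then show "isCont lam z" by (rule lam_cont)
  qed
  then show ?thesis using ru by simp
qed

lemma schwartz_pos_cont: assumes "schwartz_pos \<psi>" shows "continuous_on {0<..} \<psi>"
proof -
  define f where "f = (\<lambda>x. \<psi> (exp x))"
  have "schwartz f" using assms by (simp add: schwartz_pos_def f_def)
  then have "\<And>x. (f has_vector_derivative iter_deriv 1 f x) (at x)"
    unfolding schwartz_def by (metis One_nat_def iter_deriv.simps(1))
  then have cf: "continuous_on UNIV f"
    by (metis continuous_at_imp_continuous_on has_vector_derivative_continuous)
  have "continuous_on {0<..} (\<lambda>r. f (ln r))"
    by (rule continuous_on_compose2[OF cf]) (auto intro!: continuous_intros)
  then show ?thesis by (rule continuous_on_cong[THEN iffD1, rotated 2]) (auto simp: f_def)
qed

lemma R_pref_alg: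
  fixes e v :: real assumes "e - 1 \<noteq> 0" "1 + v - e \<noteq> 0" "v \<noteq> 0"
  shows "e * (e - 1 - v) / (e - 1)^2 * (v * (1 - e) / (1 + v - e)) = v * e / (e - 1)"
proof -
  have "e * (e - 1 - v) / (e - 1)^2 * (v * (1 - e) / (1 + v - e))
      = (e * v) * ((e - 1 - v) * (1 - e)) / ((e - 1) * (e - 1) * (1 + v - e))"
    by (simp add: power2_eq_square)
  also have "(e - 1 - v) * (1 - e) = (e - 1) * (1 + v - e)" by (simp add: algebra_simps)
  also have "(e * v) * ((e - 1) * (1 + v - e)) / ((e - 1) * (e - 1) * (1 + v - e)) = v * e / (e - 1)"
    using assms by (simp add: frac_eq_eq)
  finally show ?thesis .
qed

lemma R_pref_id: assumes "v \<noteq> 0" shows "lamd v * R_pref v = lam v"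
proof -
  have D: "exp v - 1 \<noteq> 0" using assms by simp
  have E: "1 + v - exp v \<noteq> 0" using exp_strict[OF assms] by simp
  show ?thesis using assms D E
    unfolding lamd_def R_pref_def lam_def using R_pref_alg[OF D E assms] by simp
qed

lemma R_pref_cont: "continuous_on (- {0}) R_pref"
proof -
  have "continuous_on (- {0}) (\<lambda>v::real. v * (1 - exp v) / (1 + v - exp v))"
  proof (rule continuous_on_divide)
    show "\<forall>v\<in>- {0}. 1 + v - exp v \<noteq> (0::real)"
    proof
      fix v :: real assume "v \<in> - {0}"
      then show "1 + v - exp v \<noteq> 0" using exp_strict[of v] by auto
    qed
  qed (intro continuous_intros)+
  then show ?thesis by (rule continuous_on_cong[THEN iffD1, rotated 2]) (auto simp: R_pref_def)
qed

lemma set_int_lborel: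
  fixes F :: "real \<Rightarrow> complex"
  assumes S: "S \<in> sets borel" and T: "open T" "T \<subseteq> S" "finite (S - T)"
    and c: "continuous_on T F"
  shows "(LINT x:S|lborel. F x) = (if F absolutely_integrable_on T then integral T F else 0)"
proof -
  have mT: "(\<lambda>x. indicator T x *\<^sub>R F x) \<in> borel_measurable borel"
    by (rule borel_measurable_continuous_on_indicator) (use T c in auto)
  have mS: "(\<lambda>x. indicator S x *\<^sub>R F x) \<in> borel_measurable borel"
    by (rule measurable_discrete_difference[OF mT, of "S - T"])
       (use T in \<open>auto simp: indicator_def intro: countable_finite\<close>)
  then have mS': "(\<lambda>x. indicator S x *\<^sub>R F x) \<in> borel_measurable lborel" by simp
  have eq: "(LINT x:S|lborel. F x) = (LINT x:S|lebesgue. F x)"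
    unfolding set_lebesgue_integral_def using integral_completion[OF mS'] by simp
  have ng: "negligible (S - T)" using T by auto
  have iff: "F absolutely_integrable_on S \<longleftrightarrow> F absolutely_integrable_on T"
    by (rule absolutely_integrable_spike_set_eq; rule negligible_subset[OF ng]) (use T(2) in auto)
  show ?thesis
  proof cases
    assume a: "F absolutely_integrable_on T"
    then have "F absolutely_integrable_on S" using iff by simp
    then have "(LINT x:S|lebesgue. F x) = integral S F" by (rule set_lebesgue_integral_eq_integral)
    also have "\<dots> = integral T F" using integral_subset_negligible[OF T(2) ng, of F] by simp
    finally show ?thesis using eq a by simp
  next
    assume a: "\<not> F absolutely_integrable_on T"
    then have "\<not> F absolutely_integrable_on S" using iff by simp
    then have "(LINT x:S|lebesgue. F x) = 0"
      unfolding set_lebesgue_integral_def set_integrable_def by (rule not_integrable_integral_eq)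
    then show ?thesis using eq a by simp
  qed
qed

lemma cplx_alg:
  fixes A B C E P Q :: complex
  assumes "A * B = C" "C \<noteq> 0"
  shows "A * (E * B * P * Q / C) = P * Q * E"
proof -
  have "A * (E * B * P * Q / C) = (A * B) * (P * Q * E) / C" by (simp add: algebra_simps)
  also have "\<dots> = P * Q * E" using assms by simp
  finally show ?thesis .
qed

lemma uminus_image: "uminus ` (- {0::real}) = - {0}"
proof
  show "uminus ` (- {0::real}) \<subseteq> - {0}" by auto
  show "- {0::real} \<subseteq> uminus ` (- {0})"
  proof
    fix y :: real assume "y \<in> - {0}"
    then have "y = - (- y)" "- y \<in> - {0}" by auto
    then show "y \<in> uminus ` (- {0})" by (rule image_eqI)
  qed
qed

lemma scaled_lam_image: assumes a: "a > 0" shows "(\<lambda>v. a * lam v) ` (- {0}) = {0<..} - {a}"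
proof
  show "(\<lambda>v. a * lam v) ` (- {0}) \<subseteq> {0<..} - {a}"
  proof
    fix r assume "r \<in> (\<lambda>v. a * lam v) ` (- {0})"
    then obtain v where v: "v \<in> - {0}" "r = a * lam v" by blast
    then have "lam v \<in> {0<..} - {1}" using lam_image by blast
    then have "lam v > 0" "lam v \<noteq> 1" by auto
    then show "r \<in> {0<..} - {a}" using v(2) a by auto
  qed
  show "{0<..} - {a} \<subseteq> (\<lambda>v. a * lam v) ` (- {0})"
  proof
    fix r assume r: "r \<in> {0<..} - {a}"
    then have "r / a \<in> {0<..} - {1}" using a by auto
    then obtain v where v: "v \<in> - {0}" "r / a = lam v" using lam_image by blast
    then have "r = a * lam v" using a by (simp add: field_simps)
    then show "r \<in> (\<lambda>v. a * lam v) ` (- {0})" using v by blast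
  qed
qed

theorem mainTheorem18:
  fixes \<psi> \<phi> :: "real \<Rightarrow> complex" and x a :: real
  assumes "schwartz_pos \<psi>" and "schwartz_pos \<phi>" and "a > 0"
  shows "W_Aff \<psi> \<phi> x a = inner_Rp (R_Aff x a \<psi>) \<phi>"
proof -
  have a: "a > 0" by fact
  have c\<psi>: "continuous_on {0<..} \<psi>" using assms(1) by (rule schwartz_pos_cont)
  have c\<phi>: "continuous_on {0<..} \<phi>" using assms(2) by (rule schwartz_pos_cont)
  define w where "w = (\<lambda>u. \<psi> (a * lam u) * cnj (\<phi> (a * lam (- u)))
                          * exp (- 2 * complex_of_real pi * \<i> * complex_of_real (x * u)))"
  define k where "k = (\<lambda>v. w (- v))"
  define h where "h = (\<lambda>r. R_Aff x a \<psi> r * cnj (\<phi> r) / complex_of_real r)"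
  have lnc: "continuous_on (- {0}) (\<lambda>u. lam (- u))"
    by (rule continuous_on_compose2[OF lam_cont_on[of "- {0}"] continuous_on_minus[OF continuous_on_id]]) auto
  have c1: "continuous_on (- {0}) (\<lambda>u. \<psi> (a * lam u))"
    by (rule continuous_on_compose2[OF c\<psi>]) (auto intro!: continuous_intros lam_cont_on simp: lam_pos a)
  have c2: "continuous_on (- {0}) (\<lambda>u. \<phi> (a * lam (- u)))"
    by (rule continuous_on_compose2[OF c\<phi>]) (auto intro!: continuous_intros lnc simp: lam_pos a)
  have cw: "continuous_on (- {0}) w"
    unfolding w_def by (intro continuous_intros c1 c2)
  have LHS: "W_Aff \<psi> \<phi> x a = (if w absolutely_integrable_on (- {0}) then integral (- {0}) w else 0)"
  proof -
    have "W_Aff \<psi> \<phi> x a = (LINT u:UNIV|lborel. w u)"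
      unfolding W_Aff_def w_def set_lebesgue_integral_def by simp
    also have "\<dots> = (if w absolutely_integrable_on (- {0}) then integral (- {0}) w else 0)"
    proof (rule set_int_lborel[OF _ _ _ _ cw])
      show "finite (UNIV - - {0::real})" by simp
    qed auto
    finally show ?thesis .
  qed
  define V where "V = (\<lambda>r. lam_inv (r / a))"
  have V_ne: "V r \<noteq> 0" if "r \<in> {0<..} - {a}" for r
  proof
    assume "V r = 0"
    then have "lam (lam_inv (r / a)) = lam 0" by (simp add: V_def)
    then have "r / a = 1" using that a lam_lam_inv[of "r / a"] by (simp add: lam_def)
    then show False using that a by simp
  qed
  have cV: "continuous_on ({0<..} - {a}) V"
  proof (rule continuous_at_imp_continuous_on, rule ballI)
    fix r assume r: "r \<in> {0<..} - {a}"
    have "isCont lam_inv (r / a)" using r a by (intro lam_inv_cont) auto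
    moreover have "isCont (\<lambda>r. r / a) r" using a by (intro continuous_intros) auto
    ultimately show "isCont V r" unfolding V_def using isCont_o2 by blast
  qed
  have cR: "continuous_on ({0<..} - {a}) (\<lambda>r. R_pref (V r))"
  proof (rule continuous_on_compose2[OF R_pref_cont cV])
    show "V ` ({0<..} - {a}) \<subseteq> - {0}"
    proof
      fix y assume "y \<in> V ` ({0<..} - {a})"
      then obtain r where r: "r \<in> {0<..} - {a}" "y = V r" by blast
      show "y \<in> - {0}" using V_ne[OF r(1)] r(2) by simp
    qed
  qed
  have cP: "continuous_on ({0<..} - {a}) (\<lambda>r. \<psi> (r * exp (- V r)))"
    by (rule continuous_on_compose2[OF c\<psi>]) (auto intro!: continuous_intros cV)
  have cQ: "continuous_on ({0<..} - {a}) \<phi>" by (rule continuous_on_subset[OF c\<phi>]) auto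
  have hV: "h = (\<lambda>r. exp (2 * complex_of_real pi * \<i> * complex_of_real (x * V r)) * complex_of_real (R_pref (V r))
      * \<psi> (r * exp (- V r)) * cnj (\<phi> r) / complex_of_real r)"
    by (simp add: h_def R_Aff_def V_def Let_def)
  have ch: "continuous_on ({0<..} - {a}) h"
    unfolding hV by (intro continuous_intros cV cR cP cQ) auto
  have RHS: "inner_Rp (R_Aff x a \<psi>) \<phi> =
     (if h absolutely_integrable_on ({0<..} - {a}) then integral ({0<..} - {a}) h else 0)"
  proof -
    have "inner_Rp (R_Aff x a \<psi>) \<phi> = (LINT r:{0<..}|lborel. h r)"
      by (simp add: inner_Rp_def h_def)
    also have "\<dots> = (if h absolutely_integrable_on ({0<..} - {a}) then integral ({0<..} - {a}) h else 0)"
      by (rule set_int_lborel) (use ch in \<open>auto intro: finite_subset[of _ "{a}"]\<close>)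
    finally show ?thesis .
  qed
  have d1: "(uminus has_field_derivative (- 1)) (at v within (- {0}))" for v :: real
    using DERIV_minus[OF DERIV_ident[of "at v within - {0}"]] by simp
  have k_eq: "(\<lambda>v. \<bar>- 1\<bar> *\<^sub>R w (- v)) = k" by (simp add: k_def)
  have cov1: "(k absolutely_integrable_on (- {0}) \<and> integral (- {0}) k = b) \<longleftrightarrow>
              (w absolutely_integrable_on (- {0}) \<and> integral (- {0}) w = b)" for b
    using has_absolute_integral_change_of_variables_real[of "- {0}" uminus "\<lambda>_. - 1" w b, OF _ d1]
    unfolding k_eq uminus_image by simp
  have cov1i: "k absolutely_integrable_on (- {0}) \<longleftrightarrow> w absolutely_integrable_on (- {0})"
    using absolutely_integrable_change_of_variables_real[of "- {0}" uminus "\<lambda>_. - 1" w, OF _ d1]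
    unfolding k_eq uminus_image by simp
  have d2: "((\<lambda>v. a * lam v) has_field_derivative (a * lamd v)) (at v within (- {0}))" if "v \<in> - {0}" for v
    using DERIV_cmult[OF lam_deriv, of v a] that by (auto intro: has_field_derivative_at_within)
  have inj2: "inj_on (\<lambda>v. a * lam v) (- {0})"
    using lam_inj a by (auto simp: inj_on_def dest: injD)
  have pw: "\<bar>a * lamd v\<bar> *\<^sub>R h (a * lam v) = k v" if "v \<in> - {0}" for v
  proof -
    have v: "v \<noteq> 0" using that by simp
    have pos: "a * lamd v > 0" "a * lam v > 0" using a lamd_pos[OF v] lam_pos[of v] by auto
    have Vv: "lam_inv (a * lam v / a) = v" using a by simp
    have e: "a * lam v * exp (- v) = a * lam (- v)"
      using lam_refl[of v] by (simp add: exp_minus field_simps)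
    have AB: "complex_of_real (a * lamd v) * complex_of_real (R_pref v) = complex_of_real (a * lam v)"
      using R_pref_id[OF v] by (simp flip: of_real_mult add: mult.assoc)
    have C: "complex_of_real (a * lam v) \<noteq> 0" using a lam_pos[of v] by simp
    have E: "exp (2 * complex_of_real pi * \<i> * complex_of_real (x * v))
           = exp (- 2 * complex_of_real pi * \<i> * complex_of_real (x * - v))" by simp
    have "\<bar>a * lamd v\<bar> *\<^sub>R h (a * lam v) = complex_of_real (a * lamd v) *
        (exp (2 * complex_of_real pi * \<i> * complex_of_real (x * v)) * complex_of_real (R_pref v)
         * \<psi> (a * lam (- v)) * cnj (\<phi> (a * lam v)) / complex_of_real (a * lam v))"
      using pos by (simp add: h_def R_Aff_def Let_def Vv e scaleR_conv_of_real)
    also have "\<dots> = \<psi> (a * lam (- v)) * cnj (\<phi> (a * lam v)) * exp (2 * complex_of_real pi * \<i> * complex_of_real (x * v))"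
      by (rule cplx_alg[OF AB C])
    also have "\<dots> = k v" by (simp add: k_def w_def E)
    finally show ?thesis .
  qed
  have img2: "(\<lambda>v. a * lam v) ` (- {0}) = {0<..} - {a}" using scaled_lam_image[OF a] .
  have cov2: "(k absolutely_integrable_on (- {0}) \<and> integral (- {0}) k = b) \<longleftrightarrow>
              (h absolutely_integrable_on ({0<..} - {a}) \<and> integral ({0<..} - {a}) h = b)" for b
  proof -
    have "((\<lambda>v. \<bar>a * lamd v\<bar> *\<^sub>R h (a * lam v)) absolutely_integrable_on (- {0}) \<and>
           integral (- {0}) (\<lambda>v. \<bar>a * lamd v\<bar> *\<^sub>R h (a * lam v)) = b) \<longleftrightarrow>
          (h absolutely_integrable_on ({0<..} - {a}) \<and> integral ({0<..} - {a}) h = b)"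
      using has_absolute_integral_change_of_variables_real[of "- {0}" "\<lambda>v. a * lam v" "\<lambda>v. a * lamd v" h b, OF _ d2 inj2]
      unfolding img2 by simp
    moreover have "(\<lambda>v. \<bar>a * lamd v\<bar> *\<^sub>R h (a * lam v)) absolutely_integrable_on (- {0}) \<longleftrightarrow>
                   k absolutely_integrable_on (- {0})"
      by (rule absolutely_integrable_spike_eq[of "{}"]) (use pw in auto)
    moreover have "integral (- {0}) (\<lambda>v. \<bar>a * lamd v\<bar> *\<^sub>R h (a * lam v)) = integral (- {0}) k"
      by (rule integral_cong) (use pw in auto)
    ultimately show ?thesis by simp
  qed
  have cov2i: "k absolutely_integrable_on (- {0}) \<longleftrightarrow> h absolutely_integrable_on ({0<..} - {a})"
  proof -
    have "h absolutely_integrable_on ({0<..} - {a}) \<longleftrightarrow>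
          (\<lambda>v. \<bar>a * lamd v\<bar> *\<^sub>R h (a * lam v)) absolutely_integrable_on (- {0})"
      using absolutely_integrable_change_of_variables_real[of "- {0}" "\<lambda>v. a * lam v" "\<lambda>v. a * lamd v" h, OF _ d2 inj2]
      unfolding img2 by simp
    moreover have "(\<lambda>v. \<bar>a * lamd v\<bar> *\<^sub>R h (a * lam v)) absolutely_integrable_on (- {0}) \<longleftrightarrow>
                   k absolutely_integrable_on (- {0})"
      by (rule absolutely_integrable_spike_eq[of "{}"]) (use pw in auto)
    ultimately show ?thesis by simp
  qed
  show ?thesis
  proof cases
    assume ki: "k absolutely_integrable_on (- {0})"
    define b where "b = integral (- {0}) k"
    have 1: "w absolutely_integrable_on (- {0}) \<and> integral (- {0}) w = b" using cov1[of b] ki b_def by simp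
    have 2: "h absolutely_integrable_on ({0<..} - {a}) \<and> integral ({0<..} - {a}) h = b" using cov2[of b] ki b_def by simp
    show ?thesis unfolding LHS RHS using 1 2 by simp
  next
    assume ki: "\<not> k absolutely_integrable_on (- {0})"
    then show ?thesis unfolding LHS RHS using cov1i cov2i by simp
  qed
qed

end
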